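(* Let $G = (V, E, b, c)$ be a weighted hypergraph whose edges $e_0, e_1, \dots$ are processed by procedure COVER, and let $r$ be any integer. Then for every time $t$, \[ b\left( \{ v \in e_t \mid \mathrm{eff}_{t+1}(v) \leq r \} \right) < 2^{r+1} \cdot c(e_t). \]
   Context: A weighted hypergraph $G = (V, E, b, c)$ has vertex set $V$, a multiset $E$ of non-empty edges $e \subseteq V$, benefits $b : V \to \mathbb{Q}_{>0}$ and costs $c : E \to \mathbb{Q}_{>0}$; $b(U) = \sum_{v \in U} b(v)$. Edges arrive in a stream $e_0, e_1, \dots$, and $\mathrm{id}(e)$ is an identifier of edge $e$. Procedure COVER maintains for each $v \in V$ a variable $\mathrm{eid}(v)$ (initially NULL) and an integer variable $\mathrm{eff}(v)$ (initially $-\infty$); $\mathrm{eff}_t(v)$ denotes the value of $\mathrm{eff}(v)$ just before $e_t$ is processed. For $T \subseteq e_t$ the level is $\mathrm{lev}_t(T) = \lceil \lg (b(T)/c(e_t)) \rceil$ ($\lg$ = base-2 logarithm), and $T$ is effective at time $t$ if $\mathrm{lev}_t(T) > \mathrm{eff}_t(v)$ for every $v \in T$ (the empty set is vacuously effective). When $e_t$ arrives, COVER computes an effective subset $T \subseteq e_t$ of largest benefit $b(T)$ (any such subset) and, for every $v \in T$, sets $\mathrm{eid}(v) \leftarrow \mathrm{id}(e_t)$ and $\mathrm{eff}(v) \leftarrow \mathrm{lev}_t(T)$. *)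

theory Defs
  imports Complex_Main "HOL-Library.Extended_Real"
begin

text \<open>Edges of the stream are indexed by time: the edge arriving at time t is
  E t (a vertex set) with cost c t. Benefits b and costs are positive rationals.
  eff t v is the value of eff(v) just before e_t is processed (ereal, initially -\<infinity>).\<close>

definition bsum :: "('v \<Rightarrow> rat) \<Rightarrow> 'v set \<Rightarrow> real" where
  "bsum b U = (\<Sum>v\<in>U. real_of_rat (b v))"

definition lev :: "('v \<Rightarrow> rat) \<Rightarrow> (nat \<Rightarrow> rat) \<Rightarrow> nat \<Rightarrow> 'v set \<Rightarrow> int" where
  "lev b c t T = \<lceil>log 2 (bsum b T / real_of_rat (c t))\<rceil>"

definition effective ::
  "('v \<Rightarrow> rat) \<Rightarrow> (nat \<Rightarrow> rat) \<Rightarrow> (nat \<Rightarrow> 'v \<Rightarrow> ereal) \<Rightarrow> nat \<Rightarrow> 'v set \<Rightarrow> bool" where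
  "effective b c eff t T \<longleftrightarrow> (\<forall>v\<in>T. ereal (real_of_int (lev b c t T)) > eff t v)"

text \<open>eff is a possible evolution of the eff-variables under COVER (for some
  admissible choice of maximum-benefit effective subsets).\<close>
definition cover_run ::
  "('v \<Rightarrow> rat) \<Rightarrow> (nat \<Rightarrow> 'v set) \<Rightarrow> (nat \<Rightarrow> rat) \<Rightarrow> (nat \<Rightarrow> 'v \<Rightarrow> ereal) \<Rightarrow> bool" where
  "cover_run b E c eff \<longleftrightarrow>
     eff 0 = (\<lambda>_. -\<infinity>) \<and>
     (\<forall>t. \<exists>T. T \<subseteq> E t \<and> effective b c eff t T \<and>
        (\<forall>T'. T' \<subseteq> E t \<and> effective b c eff t T' \<longrightarrow> bsum b T' \<le> bsum b T) \<and>
        eff (Suc t) = (\<lambda>v. if v \<in> T then ereal (real_of_int (lev b c t T)) else eff t v))"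

end

theory Submission
  imports Defs
begin

lemma bsum_pos:
  assumes "finite S" "S \<noteq> {}" "\<And>v. v \<in> S \<Longrightarrow> b v > 0"
  shows "bsum b S > 0"
  unfolding bsum_def using assms by (intro sum_pos) auto

lemma bsum_mono:
  assumes "finite S" "A \<subseteq> S" "\<And>v. v \<in> S \<Longrightarrow> b v > 0"
  shows "bsum b A \<le> bsum b S"
  unfolding bsum_def using assms by (intro sum_mono2) (auto simp: less_imp_le)

lemma lev_mono:
  assumes "0 < bsum b A" "bsum b A \<le> bsum b S" "c t > 0"
  shows "lev b c t A \<le> lev b c t S"
proof -
  have ct: "real_of_rat (c t) > 0" using assms by simp
  have "log 2 (bsum b A / real_of_rat (c t)) \<le> log 2 (bsum b S / real_of_rat (c t))"
    using assms ct by (simp add: divide_right_mono)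
  thus ?thesis unfolding lev_def by (rule ceiling_mono)
qed

lemma lev_big:
  assumes "2 powr (real_of_int (r + 1)) * real_of_rat (c t) \<le> bsum b S" "c t > 0"
  shows "r + 1 \<le> lev b c t S"
proof -
  have ct: "real_of_rat (c t) > 0" using assms by simp
  have "2 powr (real_of_int (r + 1)) \<le> bsum b S / real_of_rat (c t)"
    using assms ct by (simp add: pos_le_divide_eq)
  moreover have "0 < 2 powr (real_of_int (r + 1))" by simp
  ultimately have "real_of_int (r+1) \<le> log 2 (bsum b S / real_of_rat (c t))"
    by (metis le_log_iff less_le_trans one_less_numeral_iff semiring_norm(76) zero_less_numeral)
  hence "r + 1 \<le> \<lceil>log 2 (bsum b S / real_of_rat (c t))\<rceil>"
    by (meson le_of_int_ceiling order_trans of_int_le_iff)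
  thus ?thesis unfolding lev_def by simp
qed

theorem lemma7:
  fixes V :: "'v set" and E :: "nat \<Rightarrow> 'v set" and b :: "'v \<Rightarrow> rat"
    and c :: "nat \<Rightarrow> rat" and eff :: "nat \<Rightarrow> 'v \<Rightarrow> ereal" and r :: int and t :: nat
  assumes "finite V"
    and "\<And>s. E s \<subseteq> V" and "\<And>s. E s \<noteq> {}"
    and "\<And>v. v \<in> V \<Longrightarrow> b v > 0"
    and "\<And>s. c s > 0"
    and "cover_run b E c eff"
  shows "bsum b {v \<in> E t. eff (Suc t) v \<le> ereal (real_of_int r)}
           < 2 powr (real_of_int (r + 1)) * real_of_rat (c t)"
proof (rule ccontr)
  define U where "U = {v \<in> E t. eff (Suc t) v \<le> ereal (real_of_int r)}"
  assume "\<not> ?thesis"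
  hence big: "2 powr (real_of_int (r + 1)) * real_of_rat (c t) \<le> bsum b U"
    unfolding U_def by simp
  obtain T where T: "T \<subseteq> E t" "effective b c eff t T"
    "\<forall>T'. T' \<subseteq> E t \<and> effective b c eff t T' \<longrightarrow> bsum b T' \<le> bsum b T"
    "eff (Suc t) = (\<lambda>v. if v \<in> T then ereal (real_of_int (lev b c t T)) else eff t v)"
    using assms(6)[unfolded cover_run_def, THEN conjunct2, THEN spec[of _ t]]
    by (elim exE conjE) (rule that; assumption)
  have finE: "finite (E t)" using assms(1,2) finite_subset by blast
  have posE: "\<And>v. v \<in> E t \<Longrightarrow> b v > 0" using assms(2,4) by blast
  have UE: "U \<subseteq> E t" unfolding U_def by auto
  have UTE: "U \<union> T \<subseteq> E t" using UE T(1) by auto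
  have bU_le: "bsum b U \<le> bsum b (U \<union> T)"
    by (rule bsum_mono[OF finite_subset[OF UTE finE]]) (use UTE posE in auto)
  have levUT: "r + 1 \<le> lev b c t (U \<union> T)"
    using lev_big[of r c t b, OF order_trans[OF big bU_le] assms(5)[of t]] .
  have eff_UT: "effective b c eff t (U \<union> T)"
    unfolding effective_def
  proof
    fix v assume v: "v \<in> U \<union> T"
    show "ereal (real_of_int (lev b c t (U \<union> T))) > eff t v"
    proof (cases "v \<in> T")
      case True
      have Tne: "T \<noteq> {}" using True by auto
      have bTpos: "bsum b T > 0"
        by (rule bsum_pos) (use T(1) finE Tne posE finite_subset in auto)
      have bT_le: "bsum b T \<le> bsum b (U \<union> T)"
        by (rule bsum_mono[OF finite_subset[OF UTE finE]]) (use UTE posE in auto)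
      have "lev b c t T \<le> lev b c t (U \<union> T)"
        by (rule lev_mono[of b T "U \<union> T" c t, OF bTpos bT_le assms(5)[of t]])
      moreover have "eff t v < ereal (real_of_int (lev b c t T))"
        using T(2) True unfolding effective_def by auto
      ultimately show ?thesis
        by (meson less_le_trans ereal_less_eq(3) of_int_le_iff)
    next
      case False
      hence "v \<in> U" using v by auto
      hence "eff t v \<le> ereal (real_of_int r)" using False T(4) unfolding U_def by auto
      moreover have "ereal (real_of_int r) < ereal (real_of_int (lev b c t (U \<union> T)))" using levUT by simp
      ultimately show ?thesis
        by (rule le_less_trans)
    qed
  qed
  have "bsum b (U \<union> T) \<le> bsum b T" using T(3) UTE eff_UT by blast
  have "U \<subseteq> T"
  proof (rule ccontr)
    assume "\<not> U \<subseteq> T"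
    then obtain w where w: "w \<in> U" "w \<notin> T" by auto
    have "bsum b (insert w T) \<le> bsum b (U \<union> T)"
      by (rule bsum_mono[OF finite_subset[OF UTE finE]]) (use UTE posE w in auto)
    moreover have "bsum b (insert w T) = real_of_rat (b w) + bsum b T"
      unfolding bsum_def using w finite_subset[OF T(1) finE] by simp
    moreover have "real_of_rat (b w) > 0" using posE w UE by auto
    ultimately show False using \<open>bsum b (U \<union> T) \<le> bsum b T\<close> by linarith
  qed
  have "0 < 2 powr (real_of_int (r + 1)) * real_of_rat (c t)" using assms(5) by simp
  hence "U \<noteq> {}" using big unfolding bsum_def by auto
  then obtain w where w: "w \<in> U" by auto
  hence wT: "w \<in> T" using \<open>U \<subseteq> T\<close> by auto
  have "ereal (real_of_int (lev b c t T)) \<le> ereal (real_of_int r)"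
    using w wT T(4) unfolding U_def by auto
  hence "lev b c t T \<le> r" by simp
  moreover have "r + 1 \<le> lev b c t T"
    using lev_big[of r c t b, OF order_trans[OF big bsum_mono[OF finite_subset[OF T(1) finE] \<open>U \<subseteq> T\<close>]] assms(5)[of t]]
      posE T(1) by auto
  ultimately show False by simp
qed

end
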